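(* Let $q\ge 4$ be a power of $2$. Then there exist a linear AOA$(1,q-1,q+2,q)$ and a linear AOA$(3,q-1,q+2,q)$.
   Context: An orthogonal array OA$(t,k,v)$ (with $1\le t\le k$) is a $v^t\times k$ array with entries from a set $X$ of size $v$ such that, for every choice of $t$ of its columns, each $t$-tuple in $X^t$ appears exactly once as a row of the corresponding $v^t\times t$ subarray. For integers $1\le s\le t\le k$, an augmented orthogonal array AOA$(s,t,k,v)$ is a $v^t\times(k+1)$ array $A$ such that: (1) the first $k$ columns of $A$ form an OA$(t,k,v)$ on a symbol set $X$ of size $v$; (2) the last column of $A$ has entries from a set $Y$ of size $v^{t-s}$; (3) for any choice of $s$ of the first $k$ columns, these $s$ columns together with the last column contain every $(s+1)$-tuple of $X^s\times Y$ exactly once as a row. For a prime power $q$, an AOA$(s,t,k,q)$ is linear if $X=\mathbb{F}_q$, $Y=\mathbb{F}_q^{t-s}$, and its set of rows, regarded as vectors in $\mathbb{F}_q^{k}\times\mathbb{F}_q^{t-s}=\mathbb{F}_q^{k+t-s}$, is an $\mathbb{F}_q$-linear subspace. (When $q=4$, the second array is an AOA$(3,3,6,4)$, i.e. the case $s=t$.) *)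

theory Defs
  imports Main
begin

text \<open>An array is a list of rows.  A row of an OA(t,k,v) is a function
  nat => 'x whose values at columns 0..<k are the entries (other values are
  irrelevant).\<close>

definition OA :: "nat \<Rightarrow> nat \<Rightarrow> 'x set \<Rightarrow> (nat \<Rightarrow> 'x) list \<Rightarrow> bool" where
  "OA t k X A \<longleftrightarrow>
     1 \<le> t \<and> t \<le> k \<and> finite X \<and>
     length A = card X ^ t \<and>
     (\<forall>r\<in>set A. \<forall>i<k. r i \<in> X) \<and>
     (\<forall>S. S \<subseteq> {0..<k} \<longrightarrow> card S = t \<longrightarrow>
        (\<forall>f. (\<forall>i\<in>S. f i \<in> X) \<longrightarrow>
           length (filter (\<lambda>r. \<forall>i\<in>S. r i = f i) A) = 1))"

text \<open>Augmented orthogonal array AOA(s,t,k,v) with v = card X: rows are pairs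
  (entries of the first k columns, entry of the last column).\<close>

definition AOA :: "nat \<Rightarrow> nat \<Rightarrow> nat \<Rightarrow> 'x set \<Rightarrow> 'y set \<Rightarrow> ((nat \<Rightarrow> 'x) \<times> 'y) list \<Rightarrow> bool" where
  "AOA s t k X Y A \<longleftrightarrow>
     1 \<le> s \<and> s \<le> t \<and> t \<le> k \<and>
     OA t k X (map fst A) \<and>
     finite Y \<and> card Y = card X ^ (t - s) \<and>
     (\<forall>r\<in>set A. snd r \<in> Y) \<and>
     (\<forall>S. S \<subseteq> {0..<k} \<longrightarrow> card S = s \<longrightarrow>
        (\<forall>f y. (\<forall>i\<in>S. f i \<in> X) \<longrightarrow> y \<in> Y \<longrightarrow>
           length (filter (\<lambda>r. (\<forall>i\<in>S. fst r i = f i) \<and> snd r = y) A) = 1))"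

text \<open>F_q^n represented as functions nat => 'a vanishing outside {0..<n}.\<close>

definition fvec :: "nat \<Rightarrow> (nat \<Rightarrow> 'a::zero) set" where
  "fvec n = {y. \<forall>j\<ge>n. y j = 0}"

definition row_vec :: "nat \<Rightarrow> (nat \<Rightarrow> 'a) \<times> (nat \<Rightarrow> 'a) \<Rightarrow> nat \<Rightarrow> 'a" where
  "row_vec k r = (\<lambda>i. if i < k then fst r i else snd r (i - k))"

definition linear_AOA :: "nat \<Rightarrow> nat \<Rightarrow> nat \<Rightarrow> ((nat \<Rightarrow> 'a::{finite,field}) \<times> (nat \<Rightarrow> 'a)) list \<Rightarrow> bool" where
  "linear_AOA s t k A \<longleftrightarrow>
     AOA s t k (UNIV :: 'a set) (fvec (t - s)) A \<and>
     (let V = row_vec k ` set A in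
        (\<lambda>i. 0) \<in> V \<and>
        (\<forall>u\<in>V. \<forall>w\<in>V. (\<lambda>i. u i + w i) \<in> V) \<and>
        (\<forall>c. \<forall>u\<in>V. (\<lambda>i. c * u i) \<in> V))"

end

theory Submission
  imports Defs "HOL-Library.FuncSet" "HOL-Computational_Algebra.Polynomial"
begin


lemma fvec_bij:
  "bij_betw (\<lambda>m. restrict m {0..<n}) (fvec n :: (nat \<Rightarrow> 'a::zero) set) (PiE {0..<n} (\<lambda>_. UNIV))"
proof (rule bij_betwI')
  fix x y :: "nat \<Rightarrow> 'a" assume "x \<in> fvec n" "y \<in> fvec n"
  show "(restrict x {0..<n} = restrict y {0..<n}) = (x = y)"
  proof (rule iffI)
    assume eq: "restrict x {0..<n} = restrict y {0..<n}"
    show "x = y"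
    proof
      fix i show "x i = y i"
      proof (cases "i < n")
        case True thus ?thesis using fun_cong[OF eq, of i] by simp
      next
        case False thus ?thesis using \<open>x \<in> fvec n\<close> \<open>y \<in> fvec n\<close> by (simp add: fvec_def)
      qed
    qed
  qed simp
next
  fix x :: "nat \<Rightarrow> 'a" show "restrict x {0..<n} \<in> PiE {0..<n} (\<lambda>_. UNIV)" by auto
next
  fix g :: "nat \<Rightarrow> 'a" assume g: "g \<in> PiE {0..<n} (\<lambda>_. UNIV)"
  show "\<exists>x\<in>fvec n. g = restrict x {0..<n}"
    apply (rule bexI[of _ "\<lambda>i. if i < n then g i else 0"])
    using g by (auto simp: fvec_def restrict_def fun_eq_iff PiE_def extensional_def)
qed

lemma fvec_finite: "finite (fvec n :: (nat \<Rightarrow> 'a::{zero,finite}) set)"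
proof -
  have "finite (PiE {0..<n} (\<lambda>_. UNIV :: 'a set))" by (rule finite_PiE) auto
  thus ?thesis using fvec_bij[of n] bij_betw_finite by blast
qed

lemma fvec_card: "card (fvec n :: (nat \<Rightarrow> 'a::{zero,finite}) set) = card (UNIV :: 'a set) ^ n"
proof -
  have "card (fvec n :: (nat \<Rightarrow> 'a) set) = card (PiE {0..<n} (\<lambda>_. UNIV :: 'a set))"
    using fvec_bij[of n] bij_betw_same_card by blast
  also have "\<dots> = card (UNIV :: 'a set) ^ n" by (simp add: card_PiE)
  finally show ?thesis .
qed

lemma count_one:
  assumes "finite M" "finite T" "\<Phi> ` M \<subseteq> T" "inj_on \<Phi> M" "card T = card M" "z \<in> T"
  shows "card {m\<in>M. \<Phi> m = z} = 1"
proof -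
  have "card (\<Phi> ` M) = card T" using assms card_image by metis
  hence "\<Phi> ` M = T" using assms card_subset_eq by metis
  then obtain m0 where m0: "m0 \<in> M" "\<Phi> m0 = z" using assms by blast
  have "{m\<in>M. \<Phi> m = z} = {m0}" using m0 assms(4) by (auto simp: inj_on_def)
  thus ?thesis by simp
qed

lemma card_restrict_PiE:
  assumes "finite S" shows "card (PiE S (\<lambda>_. UNIV :: 'a::finite set)) = card (UNIV :: 'a set) ^ card S"
  using assms by (simp add: card_PiE)

lemma restrict_eq_iff: "(restrict f S = restrict g S) = (\<forall>i\<in>S. f i = g i)"
  by (auto simp: restrict_def fun_eq_iff)

lemma construct:
  fixes col :: "(nat \<Rightarrow> 'a::{finite,field}) \<Rightarrow> nat \<Rightarrow> 'a" and E :: "(nat \<Rightarrow> 'a) \<Rightarrow> nat \<Rightarrow> 'a"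
  assumes st: "1 \<le> s" "s \<le> t" "t \<le> k"
  and add_col: "\<And>m1 m2 i. col (\<lambda>j. m1 j + m2 j) i = col m1 i + col m2 i"
  and smul_col: "\<And>c m i. col (\<lambda>j. c * m j) i = c * col m i"
  and add_E: "\<And>m1 m2 i. E (\<lambda>j. m1 j + m2 j) i = E m1 i + E m2 i"
  and smul_E: "\<And>c m i. E (\<lambda>j. c * m j) i = c * E m i"
  and E_in: "\<And>m. m \<in> fvec t \<Longrightarrow> E m \<in> fvec (t - s)"
  and oa: "\<And>m S. m \<in> fvec t \<Longrightarrow> S \<subseteq> {0..<k} \<Longrightarrow> card S = t \<Longrightarrow> (\<forall>i\<in>S. col m i = 0) \<Longrightarrow> m = (\<lambda>_. 0)"
  and aoa: "\<And>m S. m \<in> fvec t \<Longrightarrow> S \<subseteq> {0..<k} \<Longrightarrow> card S = s \<Longrightarrow> (\<forall>i\<in>S. col m i = 0) \<Longrightarrow> E m = (\<lambda>_. 0) \<Longrightarrow> m = (\<lambda>_. 0)"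
  shows "\<exists>A :: ((nat \<Rightarrow> 'a) \<times> (nat \<Rightarrow> 'a)) list. linear_AOA s t k A"
proof -
  let ?M = "fvec t :: (nat \<Rightarrow> 'a) set"
  let ?q = "card (UNIV :: 'a set)"
  have finM: "finite ?M" by (rule fvec_finite)
  then obtain L where L: "set L = ?M" "distinct L" using finite_distinct_list by blast
  define A where "A = map (\<lambda>m. (col m, E m)) L"
  have sub_col: "col (\<lambda>j. m1 j - m2 j) i = col m1 i - col m2 i" for m1 m2 i
  proof -
    have "col (\<lambda>j. m1 j - m2 j) i = col (\<lambda>j. m1 j + (\<lambda>j. (-1) * m2 j) j) i" by simp
    also have "\<dots> = col m1 i + col (\<lambda>j. (-1) * m2 j) i" by (rule add_col)
    also have "\<dots> = col m1 i - col m2 i" using smul_col[of "-1" m2 i] by simp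
    finally show ?thesis .
  qed
  have sub_E: "E (\<lambda>j. m1 j - m2 j) i = E m1 i - E m2 i" for m1 m2 i
  proof -
    have "E (\<lambda>j. m1 j - m2 j) i = E (\<lambda>j. m1 j + (\<lambda>j. (-1) * m2 j) j) i" by simp
    also have "\<dots> = E m1 i + E (\<lambda>j. (-1) * m2 j) i" by (rule add_E)
    also have "\<dots> = E m1 i - E m2 i" using smul_E[of "-1" m2 i] by simp
    finally show ?thesis .
  qed
  have sub_in: "m1 \<in> ?M \<Longrightarrow> m2 \<in> ?M \<Longrightarrow> (\<lambda>j. m1 j - m2 j) \<in> ?M" for m1 m2
    by (simp add: fvec_def)
  have eq_from_sub: "(\<lambda>j. m1 j - m2 j) = (\<lambda>_. 0) \<Longrightarrow> m1 = m2" for m1 m2 :: "nat \<Rightarrow> 'a"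
    by (simp add: fun_eq_iff)
  have cardM: "card ?M = ?q ^ t" by (rule fvec_card)
  have lenA: "length A = ?q ^ t" using L cardM distinct_card by (metis A_def length_map)
  have OA: "OA t k (UNIV :: 'a set) (map fst A)"
    unfolding OA_def
  proof (intro conjI allI impI)
    show "1 \<le> t" "t \<le> k" using st by auto
    show "finite (UNIV :: 'a set)" by simp
    show "length (map fst A) = ?q ^ t" using lenA by simp
    show "\<forall>r\<in>set (map fst A). \<forall>i<k. r i \<in> UNIV" by simp
    fix S f assume S: "S \<subseteq> {0..<k}" "card S = t" and f: "\<forall>i\<in>S. f i \<in> (UNIV :: 'a set)"
    have finS: "finite S" using S finite_subset by blast
    have "length (filter (\<lambda>r. \<forall>i\<in>S. r i = f i) (map fst A))
        = length (filter (\<lambda>m. \<forall>i\<in>S. col m i = f i) L)"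
      by (simp add: A_def filter_map o_def)
    also have "\<dots> = card ({m. \<forall>i\<in>S. col m i = f i} \<inter> set L)"
      using L by (simp add: distinct_length_filter)
    also have "\<dots> = card {m\<in>?M. (\<lambda>m. restrict (col m) S) m = restrict f S}"
      using L by (intro arg_cong[where f=card]) (auto simp: restrict_eq_iff)
    also have "\<dots> = 1"
    proof (rule count_one[OF finM])
      show "finite (PiE S (\<lambda>_. UNIV :: 'a set))" using finS by (intro finite_PiE) auto
      show "(\<lambda>m. restrict (col m) S) ` ?M \<subseteq> PiE S (\<lambda>_. UNIV)" by auto
      show "card (PiE S (\<lambda>_. UNIV :: 'a set)) = card ?M"
        using card_restrict_PiE[OF finS] S cardM by simp
      show "restrict f S \<in> PiE S (\<lambda>_. UNIV)" by auto
      show "inj_on (\<lambda>m. restrict (col m) S) ?M"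
      proof (rule inj_onI)
        fix m1 m2 assume m: "m1 \<in> ?M" "m2 \<in> ?M" and eq: "restrict (col m1) S = restrict (col m2) S"
        have "\<forall>i\<in>S. col (\<lambda>j. m1 j - m2 j) i = 0" using eq by (simp add: restrict_eq_iff sub_col)
        thus "m1 = m2" using oa[OF sub_in[OF m] S] eq_from_sub by blast
      qed
    qed
    finally show "length (filter (\<lambda>r. \<forall>i\<in>S. r i = f i) (map fst A)) = 1" .
  qed
  have AOA: "AOA s t k (UNIV :: 'a set) (fvec (t - s)) A"
    unfolding AOA_def
  proof (intro conjI allI impI)
    show "1 \<le> s" "s \<le> t" "t \<le> k" using st by auto
    show "OA t k UNIV (map fst A)" by (rule OA)
    show "finite (fvec (t - s) :: (nat \<Rightarrow> 'a) set)" by (rule fvec_finite)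
    show "card (fvec (t - s) :: (nat \<Rightarrow> 'a) set) = ?q ^ (t - s)" by (rule fvec_card)
    show "\<forall>r\<in>set A. snd r \<in> fvec (t - s)" using L E_in by (auto simp: A_def)
    fix S f and y :: "nat \<Rightarrow> 'a" assume S: "S \<subseteq> {0..<k}" "card S = s" and f: "\<forall>i\<in>S. f i \<in> (UNIV :: 'a set)"
      and y: "y \<in> fvec (t - s)"
    have finS: "finite S" using S finite_subset by blast
    let ?T = "PiE S (\<lambda>_. UNIV :: 'a set) \<times> (fvec (t - s) :: (nat \<Rightarrow> 'a) set)"
    have "length (filter (\<lambda>r. (\<forall>i\<in>S. fst r i = f i) \<and> snd r = y) A)
        = length (filter (\<lambda>m. (\<forall>i\<in>S. col m i = f i) \<and> E m = y) L)"
      by (simp add: A_def filter_map o_def)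
    also have "\<dots> = card ({m. (\<forall>i\<in>S. col m i = f i) \<and> E m = y} \<inter> set L)"
      using L by (simp add: distinct_length_filter)
    also have "\<dots> = card {m\<in>?M. (\<lambda>m. (restrict (col m) S, E m)) m = (restrict f S, y)}"
      using L by (intro arg_cong[where f=card]) (auto simp: restrict_eq_iff)
    also have "\<dots> = 1"
    proof (rule count_one[OF finM])
      show "finite ?T" using finS fvec_finite by (intro finite_cartesian_product finite_PiE) auto
      show "(\<lambda>m. (restrict (col m) S, E m)) ` ?M \<subseteq> ?T" using E_in by auto
      have "card ?T = ?q ^ s * ?q ^ (t - s)"
        using card_restrict_PiE[OF finS] S fvec_card card_cartesian_product by metis
      also have "\<dots> = ?q ^ t" using st by (simp flip: power_add)
      finally show "card ?T = card ?M" using cardM by simp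
      show "(restrict f S, y) \<in> ?T" using y by auto
      show "inj_on (\<lambda>m. (restrict (col m) S, E m)) ?M"
      proof (rule inj_onI)
        fix m1 m2 assume m: "m1 \<in> ?M" "m2 \<in> ?M"
          and eq: "(restrict (col m1) S, E m1) = (restrict (col m2) S, E m2)"
        have "\<forall>i\<in>S. col (\<lambda>j. m1 j - m2 j) i = 0" using eq by (simp add: restrict_eq_iff sub_col)
        moreover have "E (\<lambda>j. m1 j - m2 j) = (\<lambda>_. 0)" using eq by (simp add: fun_eq_iff sub_E)
        ultimately show "m1 = m2" using aoa[OF sub_in[OF m] S] eq_from_sub by blast
      qed
    qed
    finally show "length (filter (\<lambda>r. (\<forall>i\<in>S. fst r i = f i) \<and> snd r = y) A) = 1" .
  qed
  let ?V = "row_vec k ` set A"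
  have rv: "row_vec k (col m, E m) = (\<lambda>i. if i < k then col m i else E m (i - k))" for m
    unfolding row_vec_def by (simp only: fst_conv snd_conv)
  have V: "?V = (\<lambda>m. row_vec k (col m, E m)) ` ?M" using L by (auto simp: A_def)
  define z :: "nat \<Rightarrow> 'a" where "z = (\<lambda>j. 0)"
  have zM: "z \<in> ?M" by (simp add: fvec_def z_def)
  have z0: "(\<lambda>j. 0 * z j) = z" unfolding z_def by (rule ext) simp
  have zc: "col z i = 0" for i using smul_col[of 0 z i] unfolding z0 by simp
  have zE: "E z i = 0" for i using smul_E[of 0 z i] unfolding z0 by simp
  have r: "row_vec k (col z, E z) = (\<lambda>i. 0)" by (rule ext) (simp add: row_vec_def zc zE)
  have "(\<lambda>i. 0) \<in> ?V" unfolding V by (rule image_eqI[of _ _ z]) (simp_all add: r zM)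
  moreover have "\<forall>u\<in>?V. \<forall>w\<in>?V. (\<lambda>i. u i + w i) \<in> ?V"
  proof (intro ballI)
    fix u w assume "u \<in> ?V" "w \<in> ?V"
    then obtain m1 m2 where m: "m1 \<in> ?M" "m2 \<in> ?M" and u: "u = row_vec k (col m1, E m1)"
      and w: "w = row_vec k (col m2, E m2)" unfolding V by blast
    have "(\<lambda>j. m1 j + m2 j) \<in> ?M" using m by (simp add: fvec_def)
    moreover have "(\<lambda>i. u i + w i) = row_vec k (col (\<lambda>j. m1 j + m2 j), E (\<lambda>j. m1 j + m2 j))"
      by (simp add: u w rv add_col add_E fun_eq_iff)
    ultimately show "(\<lambda>i. u i + w i) \<in> ?V" unfolding V by blast
  qed
  moreover have "\<forall>c. \<forall>u\<in>?V. (\<lambda>i. c * u i) \<in> ?V"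
  proof (intro allI ballI)
    fix c u assume "u \<in> ?V"
    then obtain m1 where m: "m1 \<in> ?M" and u: "u = row_vec k (col m1, E m1)" unfolding V by blast
    have "(\<lambda>j. c * m1 j) \<in> ?M" using m by (simp add: fvec_def)
    moreover have "(\<lambda>i. c * u i) = row_vec k (col (\<lambda>j. c * m1 j), E (\<lambda>j. c * m1 j))"
      by (simp add: u rv smul_col smul_E fun_eq_iff)
    ultimately show "(\<lambda>i. c * u i) \<in> ?V" unfolding V by blast
  qed
  ultimately have "linear_AOA s t k A" using AOA unfolding linear_AOA_def Let_def by blast
  thus ?thesis by blast
qed



lemma of_nat_card_zero: "(of_nat (card (UNIV :: 'a::{finite,field} set)) :: 'a) = 0"
proof -
  have inj: "inj (\<lambda>x::'a. x + 1)" by (rule injI) simp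
  have surj: "range (\<lambda>x::'a. x + 1) = UNIV" by (rule surjI[of _ "\<lambda>x. x - 1"]) simp
  have "(\<Sum>x\<in>(UNIV::'a set). x) = (\<Sum>x\<in>range (\<lambda>x::'a. x + 1). x)" by (simp only: surj)
  also have "\<dots> = (\<Sum>x\<in>UNIV. x + 1)" by (simp only: sum.reindex[OF inj] o_def)
  also have "\<dots> = (\<Sum>x\<in>UNIV. x) + (\<Sum>x\<in>(UNIV::'a set). 1)" by (rule sum.distrib)
  also have "(\<Sum>x\<in>(UNIV::'a set). 1) = (of_nat (card (UNIV :: 'a set)) :: 'a)" by simp
  finally show "(of_nat (card (UNIV :: 'a set)) :: 'a) = 0" by simp
qed

lemma char2_of_card:
  assumes "card (UNIV :: 'a::{finite,field} set) = 2 ^ m" "m \<ge> 1"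
  shows "(1::'a) + 1 = 0"
proof -
  have "(2::'a) ^ m = 0" using assms(1) of_nat_card_zero[where 'a='a]
    by (simp only: of_nat_power of_nat_numeral)
  hence "(2::'a) = 0" by (simp only: power_eq_0_iff) 
  thus ?thesis by (simp only: one_add_one)
qed

lemma R1:
  fixes c :: "nat \<Rightarrow> 'a::field"
  assumes "finite Z" "n \<le> card Z" "\<forall>x\<in>Z. (\<Sum>i<n. c i * x ^ i) = 0"
  shows "\<forall>i<n. c i = 0"
proof -
  define p where "p = (\<Sum>i<n. monom (c i) i)"
  have ev: "poly p x = (\<Sum>i<n. c i * x ^ i)" for x by (simp add: p_def poly_sum poly_monom)
  have cf: "coeff p i = c i" if "i < n" for i
    using that by (simp add: p_def coeff_sum)
  have "p = 0"
  proof (rule ccontr)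
    assume p0: "p \<noteq> 0"
    have "n > 0" using p0 by (cases n) (auto simp: p_def)
    have "degree p \<le> n - 1" unfolding p_def
      by (rule degree_sum_le) (auto intro: order.trans[OF degree_monom_le])
    moreover have "card Z \<le> card {x. poly p x = 0}"
      using assms(3) ev by (intro card_mono poly_roots_finite[OF p0]) auto
    moreover have "card {x. poly p x = 0} \<le> degree p" by (rule card_poly_roots_bound[OF p0])
    ultimately show False using assms(2) \<open>n > 0\<close> by linarith
  qed
  thus ?thesis using cf by auto
qed

definition ev :: "nat \<Rightarrow> (nat \<Rightarrow> 'a::field) \<Rightarrow> 'a \<Rightarrow> 'a" where
  "ev q m x = (\<Sum>i<q - 1. m i * x ^ i)"

definition col :: "nat \<Rightarrow> (nat \<Rightarrow> 'a::field) \<Rightarrow> (nat \<Rightarrow> 'a) \<Rightarrow> nat \<Rightarrow> 'a" where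
  "col q e m i = (if i < q then ev q m (e i) else if i = q then m (q - 2) else m (q - 3))"

lemma col_add: "col q e (\<lambda>j. m1 j + m2 j) i = col q e m1 i + col q e m2 i"
  by (simp add: col_def ev_def sum.distrib distrib_right)

lemma col_smul: "col q e (\<lambda>j. c * m j) i = c * col q e m i"
  by (simp add: col_def ev_def sum_distrib_left mult.assoc)

definition E3 :: "nat \<Rightarrow> (nat \<Rightarrow> 'a::field) \<Rightarrow> nat \<Rightarrow> 'a" where
  "E3 q m j = (if j < q - 4 then m (j + 1) else 0)"

definition E1 :: "nat \<Rightarrow> 'a \<Rightarrow> (nat \<Rightarrow> 'a::field) \<Rightarrow> nat \<Rightarrow> 'a" where
  "E1 q \<beta> m j = (if j < q - 4 then m (j + 1) else if j = q - 4 then m (q - 2) - m (q - 3)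
     else if j = q - 3 then m 0 - \<beta> * m (q - 2) else 0)"

lemma R1_3:
  fixes a b c :: "'a::{finite,field}"
  assumes "3 \<le> card Z" "\<forall>x\<in>Z. c * x ^ 2 + a * x + b = 0"
  shows "a = 0 \<and> b = 0 \<and> c = 0"
proof -
  define co where "co = (\<lambda>i::nat. if i = 0 then b else if i = 1 then a else c)"
  have "\<forall>i<3. co i = 0"
  proof (rule R1[of Z])
    show "finite Z" by simp
    show "3 \<le> card Z" by fact
    have "(\<Sum>i<3. co i * x ^ i) = c * x ^ 2 + a * x + b" for x
      by (simp add: co_def numeral_3_eq_3 power2_eq_square)
    thus "\<forall>x\<in>Z. (\<Sum>i<3. co i * x ^ i) = 0" using assms(2) by simp
  qed
  thus ?thesis by (auto simp: co_def dest: spec[of _ 0] spec[of _ 1] spec[of _ 2])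
qed

context
  fixes q :: nat
  assumes cardq: "card (UNIV :: 'a::{finite,field} set) = q"
    and q4: "4 \<le> q"
    and ch2: "(1::'a) + 1 = 0"
begin

lemma neg_self: "- (x::'a) = x"
proof -
  have "x + x = (1 + 1) * x" by (simp add: algebra_simps)
  also have "\<dots> = 0" using ch2 by simp
  finally show ?thesis by (simp add: add_eq_0_iff)
qed

lemma ofq: "(of_nat q :: 'a) = 0" using of_nat_card_zero[where 'a='a] cardq by simp

lemma fermat:
  assumes "(x::'a) \<noteq> 0" shows "x ^ (q - 1) = 1"
proof -
  let ?N = "UNIV - {0::'a}"
  have inj: "inj_on (\<lambda>y. x * y) ?N" using assms by (auto simp: inj_on_def)
  have img: "(\<lambda>y. x * y) ` ?N = ?N"
  proof
    show "(\<lambda>y. x * y) ` ?N \<subseteq> ?N" using assms by auto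
    show "?N \<subseteq> (\<lambda>y. x * y) ` ?N"
    proof
      fix z assume z: "z \<in> ?N"
      have "z = x * (z / x)" using assms by simp
      moreover have "z / x \<in> ?N" using z assms by simp
      ultimately show "z \<in> (\<lambda>y. x * y) ` ?N" by blast
    qed
  qed
  have cN: "card ?N = q - 1" using cardq by (simp add: card_Diff_subset)
  have "prod (\<lambda>y. y) ?N = prod (\<lambda>y. y) ((\<lambda>y. x * y) ` ?N)" by (simp only: img)
  also have "\<dots> = prod (\<lambda>y. x * y) ?N" by (simp only: prod.reindex[OF inj] o_def)
  also have "\<dots> = x ^ (q - 1) * prod (\<lambda>y. y) ?N" by (simp add: prod.distrib cN)
  finally have "1 * prod (\<lambda>y. y) ?N = x ^ (q - 1) * prod (\<lambda>y. y) ?N" by simp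
  moreover have "prod (\<lambda>y. y) ?N \<noteq> 0" by simp
  ultimately show ?thesis by (metis mult_right_cancel)
qed

lemma frob: "(x::'a) ^ q = x"
proof (cases "x = 0")
  case True thus ?thesis using q4 by simp
next
  case False
  have "x ^ q = x * x ^ (q - 1)" using q4 by (metis Suc_diff_1 le_trans power_Suc zero_less_numeral le0 not_less linorder_not_le numeral_le_iff)
  thus ?thesis using fermat[OF False] by simp
qed

lemma ps_low:
  assumes "1 \<le> n" "n \<le> q - 2" shows "(\<Sum>x\<in>(UNIV::'a set). x ^ n) = 0"
proof -
  have "\<exists>c::'a. c \<noteq> 0 \<and> c ^ n \<noteq> 1"
  proof (rule ccontr)
    assume H: "\<not> ?thesis"
    define p :: "'a poly" where "p = monom 1 n + [:-1:]"
    have dp: "degree p = n" unfolding p_def using assms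
      by (subst degree_add_eq_left) (auto simp: degree_monom_eq)
    have p0: "p \<noteq> 0" using dp assms by auto
    have "UNIV - {0} \<subseteq> {x. poly p x = 0}" using H by (auto simp: p_def poly_monom)
    hence "card (UNIV - {0::'a}) \<le> card {x. poly p x = 0}"
      by (intro card_mono poly_roots_finite[OF p0])
    also have "\<dots> \<le> n" using card_poly_roots_bound[OF p0] dp by simp
    finally show False using cardq assms q4 by (simp add: card_Diff_subset)
  qed
  then obtain c :: 'a where c: "c \<noteq> 0" "c ^ n \<noteq> 1" by blast
  have inj: "inj (\<lambda>y. c * y)" using c by (auto simp: inj_on_def)
  have surj: "range (\<lambda>y. c * y) = UNIV" by (rule surjI[of _ "\<lambda>y. y / c"]) (use c in simp)
  have "(\<Sum>x\<in>(UNIV::'a set). x ^ n) = (\<Sum>x\<in>range (\<lambda>y. c * y). x ^ n)" by (simp only: surj)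
  also have "\<dots> = (\<Sum>x\<in>UNIV. (c * x) ^ n)" by (simp only: sum.reindex[OF inj] o_def)
  also have "\<dots> = c ^ n * (\<Sum>x\<in>(UNIV::'a set). x ^ n)" by (simp add: power_mult_distrib sum_distrib_left)
  finally have "(c ^ n - 1) * (\<Sum>x\<in>(UNIV::'a set). x ^ n) = 0" by (simp add: algebra_simps)
  thus ?thesis using c by simp
qed

lemma ps_zero:
  assumes "n \<le> q" "n \<noteq> q - 1" shows "(\<Sum>x\<in>(UNIV::'a set). x ^ n) = 0"
proof -
  consider "n = 0" | "1 \<le> n \<and> n \<le> q - 2" | "n = q" using assms by linarith
  thus ?thesis
  proof cases
    case 1 thus ?thesis using ofq cardq by simp
  next
    case 2 thus ?thesis using ps_low by blast
  next
    case 3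
    have "(\<Sum>x\<in>(UNIV::'a set). x ^ n) = (\<Sum>x\<in>(UNIV::'a set). x ^ 1)" using 3 frob by simp
    also have "\<dots> = 0" using ps_low[of 1] q4 by simp
    finally show ?thesis .
  qed
qed

lemma ps_top: "(\<Sum>x\<in>(UNIV::'a set). x ^ (q - 1)) = 1"
proof -
  have "(\<Sum>x\<in>(UNIV::'a set). x ^ (q - 1)) = 0 ^ (q - 1) + (\<Sum>x\<in>UNIV - {0}. x ^ (q - 1))"
    by (simp add: sum.remove[of UNIV 0])
  also have "(\<Sum>x\<in>UNIV - {0::'a}. x ^ (q - 1)) = (\<Sum>x\<in>UNIV - {0::'a}. 1)"
    using fermat by (intro sum.cong) auto
  also have "\<dots> = of_nat (q - 1)" using cardq by (simp add: card_Diff_subset)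
  also have "(of_nat (q - 1) :: 'a) = of_nat q - 1" using q4 by (simp add: of_nat_diff)
  also have "0 ^ (q - 1) = (0::'a)" using q4 by simp
  finally show ?thesis using ofq neg_self[of 1] by simp
qed


lemma trunc:
  fixes m :: "nat \<Rightarrow> 'a" and Z :: "'a set"
  assumes "n \<le> q - 1" "\<forall>i. n \<le> i \<and> i < q - 1 \<longrightarrow> m i = 0" "n \<le> card Z" "\<forall>x\<in>Z. ev q m x = 0"
  shows "\<forall>i<n. m i = 0"
proof (rule R1[of Z n m])
  show "finite Z" by simp
  show "n \<le> card Z" by fact
  have "ev q m x = (\<Sum>i<n. m i * x ^ i)" for x
    unfolding ev_def using assms(1,2) by (intro sum.mono_neutral_right) auto
  thus "\<forall>x\<in>Z. (\<Sum>i<n. m i * x ^ i) = 0" using assms(4) by simp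
qed

lemma sum_pow_ev:
  "(\<Sum>x\<in>(UNIV::'a set). x ^ j * ev q m x) = (\<Sum>i<q - 1. m i * (\<Sum>x\<in>(UNIV::'a set). x ^ (i + j)))"
proof -
  have "(\<Sum>x\<in>(UNIV::'a set). x ^ j * ev q m x) = (\<Sum>x\<in>(UNIV::'a set). \<Sum>i<q - 1. m i * x ^ (i + j))"
    unfolding ev_def by (simp add: sum_distrib_left power_add algebra_simps)
  also have "\<dots> = (\<Sum>i<q - 1. \<Sum>x\<in>(UNIV::'a set). m i * x ^ (i + j))" by (rule sum.swap)
  also have "\<dots> = (\<Sum>i<q - 1. m i * (\<Sum>x\<in>(UNIV::'a set). x ^ (i + j)))" by (simp add: sum_distrib_left)
  finally show ?thesis .
qed

lemma ev3:
  assumes "\<forall>j. 1 \<le> j \<and> j < q - 3 \<longrightarrow> m j = 0"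
  shows "ev q m x = m 0 + m (q - 3) * x ^ (q - 3) + m (q - 2) * x ^ (q - 2)"
proof -
  have "ev q m x = (\<Sum>i\<in>{0, q - 3, q - 2}. m i * x ^ i)"
    unfolding ev_def
  proof (rule sum.mono_neutral_right)
    show "finite {..<q - 1}" by simp
    show "{0, q - 3, q - 2} \<subseteq> {..<q - 1}" using q4 by auto
    show "\<forall>i\<in>{..<q - 1} - {0, q - 3, q - 2}. m i * x ^ i = 0"
    proof
      fix i assume "i \<in> {..<q - 1} - {0, q - 3, q - 2}"
      hence "1 \<le> i \<and> i < q - 3" by auto
      thus "m i * x ^ i = 0" using assms by simp
    qed
  qed
  also have "\<dots> = m 0 + m (q - 3) * x ^ (q - 3) + m (q - 2) * x ^ (q - 2)"
  proof -
    have d: "0 \<noteq> q - 3" "0 \<noteq> q - 2" "q - 3 \<noteq> q - 2" using q4 by auto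
    thus ?thesis by (simp add: d add.assoc)
  qed
  finally show ?thesis .
qed

lemma ev3_0:
  assumes "\<forall>j. 1 \<le> j \<and> j < q - 3 \<longrightarrow> m j = 0"
  shows "ev q m 0 = m 0"
proof -
  have "ev q m 0 = m 0 + m (q - 3) * 0 ^ (q - 3) + m (q - 2) * 0 ^ (q - 2)" by (rule ev3[OF assms])
  also have "\<dots> = m 0" using q4 by (simp add: power_0_left)
  finally show ?thesis .
qed

lemma ev3_nz:
  assumes "\<forall>j. 1 \<le> j \<and> j < q - 3 \<longrightarrow> m j = 0" and x: "(x::'a) \<noteq> 0"
  shows "x ^ 2 * ev q m x = m 0 * x ^ 2 + m (q - 2) * x + m (q - 3)"
proof -
  have "x ^ 2 * x ^ (q - 3) = x ^ (2 + (q - 3))" by (simp only: power_add)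
  also have "2 + (q - 3) = q - 1" using q4 by simp
  finally have "x ^ 2 * x ^ (q - 3) = x ^ (q - 1)" .
  hence p1: "x ^ 2 * x ^ (q - 3) = 1" using fermat[OF x] by simp
  have "x ^ 2 * x ^ (q - 2) = x ^ (2 + (q - 2))" by (simp only: power_add)
  also have "2 + (q - 2) = q" using q4 by simp
  finally have "x ^ 2 * x ^ (q - 2) = x ^ q" .
  hence p2: "x ^ 2 * x ^ (q - 2) = x" using frob by simp
  have "x ^ 2 * ev q m x = m 0 * x ^ 2 + m (q - 3) * (x ^ 2 * x ^ (q - 3)) + m (q - 2) * (x ^ 2 * x ^ (q - 2))"
    unfolding ev3[OF assms(1)] by (simp add: algebra_simps)
  thus ?thesis using p1 p2 by (simp add: algebra_simps)
qed

context
  fixes e :: "nat \<Rightarrow> 'a"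
  assumes e: "bij_betw e {0..<q} UNIV"
begin

lemma oa_ker:
  assumes m: "m \<in> fvec (q - 1)" and S: "S \<subseteq> {0..<q + 2}" "card S = q - 1"
    and z: "\<forall>i\<in>S. col q e m i = 0"
  shows "m = (\<lambda>_. 0)"
proof -
  define R where "R = S \<inter> {0..<q}"
  define Z where "Z = e ` R"
  have finS: "finite S" using S finite_subset by blast
  have cZ: "card Z = card R" unfolding Z_def
    using e by (intro card_image) (auto simp: R_def bij_betw_def intro: inj_on_subset)
  have zZ: "\<forall>x\<in>Z. ev q m x = 0" using z by (auto simp: Z_def R_def col_def)
  have Sdec: "S = R \<union> (S \<inter> {q, q + 1})" using S by (auto simp: R_def)
  have cS: "card S = card R + card (S \<inter> {q, q + 1})"
    by (subst Sdec, rule card_Un_disjoint) (use finS in \<open>auto simp: R_def\<close>)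
  have "card (S \<inter> {q, q + 1}) \<le> card {q, q + 1}" by (intro card_mono) auto
  hence c2: "card (S \<inter> {q, q + 1}) \<le> 2" by simp
  have qS: "q \<in> S \<Longrightarrow> m (q - 2) = 0" using z by (auto simp: col_def)
  have q1S: "q + 1 \<in> S \<Longrightarrow> m (q - 3) = 0" using z by (auto simp: col_def)
  have mhi: "\<forall>j\<ge>q - 1. m j = 0" using m by (simp add: fvec_def)
  have fin_from: "m = (\<lambda>_. 0)" if "\<forall>i<q - 1. m i = 0"
    using that mhi by (auto simp: fun_eq_iff) (meson not_le)
  have big: "m = (\<lambda>_. 0)" if "q - 1 \<le> card Z'" "\<forall>x\<in>Z'. ev q m x = 0" for Z'
    by (rule fin_from, rule trunc) (use that in auto)
  show ?thesis
  proof (cases "m (q - 2) = 0")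
    case a0: True
    show ?thesis
    proof (cases "m (q - 3) = 0")
      case b0: True
      have "\<forall>i<q - 3. m i = 0"
      proof (rule trunc[of _ m Z])
        show "q - 3 \<le> q - 1" by simp
        show "\<forall>i. q - 3 \<le> i \<and> i < q - 1 \<longrightarrow> m i = 0"
        proof (intro allI impI)
          fix i assume "q - 3 \<le> i \<and> i < q - 1"
          hence "i = q - 3 \<or> i = q - 2" using q4 by linarith
          thus "m i = 0" using a0 b0 by blast
        qed
        show "q - 3 \<le> card Z" using cS c2 cZ S by linarith
        show "\<forall>x\<in>Z. ev q m x = 0" by (rule zZ)
      qed
      have "\<forall>i<q - 1. m i = 0"
      proof (intro allI impI)
        fix i assume "i < q - 1"
        hence "i < q - 3 \<or> i = q - 3 \<or> i = q - 2" using q4 by linarith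
        thus "m i = 0" using a0 b0 \<open>\<forall>i<q - 3. m i = 0\<close> by blast
      qed
      thus ?thesis by (rule fin_from)
    next
      case b1: False
      hence "q + 1 \<notin> S" using q1S by blast
      hence "S \<inter> {q, q + 1} \<subseteq> {q}" by blast
      hence "card (S \<inter> {q, q + 1}) \<le> card {q}" by (intro card_mono) auto
      hence "card (S \<inter> {q, q + 1}) \<le> 1" by simp
      hence "q - 2 \<le> card Z" using cS cZ S by linarith
      have "\<forall>i<q - 2. m i = 0"
      proof (rule trunc[of _ m Z])
        show "q - 2 \<le> q - 1" by simp
        show "\<forall>i. q - 2 \<le> i \<and> i < q - 1 \<longrightarrow> m i = 0"
        proof (intro allI impI)
          fix i assume "q - 2 \<le> i \<and> i < q - 1"
          hence "i = q - 2" using q4 by linarith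
          thus "m i = 0" using a0 by blast
        qed
        show "q - 2 \<le> card Z" by fact
        show "\<forall>x\<in>Z. ev q m x = 0" by (rule zZ)
      qed
      moreover have "q - 3 < q - 2" using q4 by linarith
      ultimately have "m (q - 3) = 0" by blast
      thus ?thesis using b1 by blast
    qed
  next
    case a1: False
    hence qn: "q \<notin> S" using qS by blast
    show ?thesis
    proof (cases "q - 1 \<le> card Z")
      case True thus ?thesis using big zZ by blast
    next
      case False
      have "S \<inter> {q, q + 1} \<subseteq> {q + 1}" using qn by blast
      hence "card (S \<inter> {q, q + 1}) \<le> card {q + 1}" by (intro card_mono) auto
      hence "card (S \<inter> {q, q + 1}) \<le> 1" by simp
      hence cZ2: "card Z = q - 2" using cS cZ S False by linarith
      have b0: "m (q - 3) = 0"
      proof (rule ccontr)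
        assume "m (q - 3) \<noteq> 0"
        hence "q + 1 \<notin> S" using q1S by blast
        hence "S \<inter> {q, q + 1} = {}" using qn by auto
        thus False using cS cZ S False by simp
      qed
      define N where "N = UNIV - Z"
      have cN: "card N = 2" unfolding N_def using cZ2 cardq q4 by (simp add: card_Diff_subset)
      then obtain u w where uw: "N = {u, w}" "u \<noteq> w" by (meson card_2_iff)
      let ?f = "ev q m"
      have fo: "?f x = 0" if "x \<notin> N" for x using that zZ by (auto simp: N_def)
      have red: "(\<Sum>x\<in>(UNIV::'a set). x ^ j * ?f x) = u ^ j * ?f u + w ^ j * ?f w" for j
      proof -
        have "(\<Sum>x\<in>(UNIV::'a set). x ^ j * ?f x) = (\<Sum>x\<in>N. x ^ j * ?f x)"
          by (rule sum.mono_neutral_right) (auto simp: fo)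
        thus ?thesis using uw by simp
      qed
      have s0: "(\<Sum>x\<in>(UNIV::'a set). x ^ 0 * ?f x) = 0"
        unfolding sum_pow_ev by (rule sum.neutral) (auto intro!: ps_zero)
      have s2: "(\<Sum>x\<in>(UNIV::'a set). x ^ 2 * ?f x) = 0"
        unfolding sum_pow_ev
      proof (rule sum.neutral, intro ballI)
        fix i assume i: "i \<in> {..<q - 1}"
        show "m i * (\<Sum>x\<in>(UNIV::'a set). x ^ (i + 2)) = 0"
        proof (cases "i = q - 3")
          case True thus ?thesis using b0 by simp
        next
          case False
          hence "i + 2 \<le> q" "i + 2 \<noteq> q - 1" using i q4 by auto
          hence "(\<Sum>x\<in>(UNIV::'a set). x ^ (i + 2)) = 0" by (intro ps_zero)
          thus ?thesis by (simp only: mult_zero_right)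
        qed
      qed
      have e1: "?f u + ?f w = 0" using s0 red[of 0] by simp
      hence fw: "?f w = ?f u" using neg_self[of "?f u"] by (metis add_eq_0_iff)
      have "u ^ 2 * ?f u + w ^ 2 * ?f u = 0" using s2 red[of 2] fw by simp
      hence "(u + w) ^ 2 * ?f u = 0"
      proof -
        have "(u + w) ^ 2 = u ^ 2 + w ^ 2 + (1 + 1) * u * w" by (simp add: power2_eq_square algebra_simps)
        hence "(u + w) ^ 2 = u ^ 2 + w ^ 2" using ch2 by simp
        thus ?thesis using \<open>u ^ 2 * ?f u + w ^ 2 * ?f u = 0\<close> by (simp add: distrib_right)
      qed
      moreover have "u + w \<noteq> 0"
      proof
        assume "u + w = 0"
        hence "w = - u" by (simp add: eq_neg_iff_add_eq_0 add.commute)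
        thus False using uw neg_self by simp
      qed
      ultimately have "?f u = 0" by simp
      have "\<forall>x\<in>UNIV. ?f x = 0"
      proof
        fix x :: 'a
        show "?f x = 0"
        proof (cases "x \<in> N")
          case True
          hence "x = u \<or> x = w" using uw by blast
          thus ?thesis using fw \<open>?f u = 0\<close> by auto
        next
          case False thus ?thesis by (rule fo)
        qed
      qed
      hence "m = (\<lambda>_. 0)" using big[of UNIV] cardq by simp
      thus ?thesis .
    qed
  qed
qed


lemma aoa3_ker:
  assumes m: "m \<in> fvec (q - 1)" and E: "E3 q m = (\<lambda>_. 0)" and S: "S \<subseteq> {0..<q + 2}" "card S = 3"
    and z: "\<forall>i\<in>S. col q e m i = 0"
  shows "m = (\<lambda>_. 0)"
proof -
  have mid: "\<forall>j. 1 \<le> j \<and> j < q - 3 \<longrightarrow> m j = 0"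
  proof (intro allI impI)
    fix j assume j: "1 \<le> j \<and> j < q - 3"
    have "E3 q m (j - 1) = 0" using E by simp
    moreover have "j - 1 < q - 4" "j - 1 + 1 = j" using j by auto
    ultimately show "m j = 0" by (simp add: E3_def)
  qed
  have mhi: "\<forall>j\<ge>q - 1. m j = 0" using m by (simp add: fvec_def)
  define a where "a = m (q - 2)"
  define b where "b = m (q - 3)"
  define c where "c = m 0"
  define R where "R = S \<inter> {0..<q}"
  define Z where "Z = e ` R"
  have finS: "finite S" using S finite_subset by blast
  have cZ: "card Z = card R" unfolding Z_def
    using e by (intro card_image) (auto simp: R_def bij_betw_def intro: inj_on_subset)
  have zZ: "\<forall>x\<in>Z. ev q m x = 0" using z by (auto simp: Z_def R_def col_def)
  have z0: "0 \<in> Z \<Longrightarrow> c = 0" using zZ ev3_0[OF mid] by (simp add: c_def)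
  have zP: "x \<in> Z \<Longrightarrow> x \<noteq> 0 \<Longrightarrow> c * x ^ 2 + a * x + b = 0" for x
    using zZ ev3_nz[OF mid, of x] by (auto simp: a_def b_def c_def algebra_simps)
  have Sdec: "S = R \<union> (S \<inter> {q, q + 1})" using S by (auto simp: R_def)
  have cS: "card S = card R + card (S \<inter> {q, q + 1})"
    by (subst Sdec, rule card_Un_disjoint) (use finS in \<open>auto simp: R_def\<close>)
  have qS: "q \<in> S \<Longrightarrow> a = 0" using z by (auto simp: col_def a_def)
  have q1S: "q + 1 \<in> S \<Longrightarrow> b = 0" using z by (auto simp: col_def b_def)
  have sq_inj: "x1 ^ 2 \<noteq> x2 ^ 2" if "x1 \<noteq> x2" for x1 x2 :: 'a
  proof
    assume "x1 ^ 2 = x2 ^ 2"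
    moreover have "(x1 + x2) ^ 2 = x1 ^ 2 + x2 ^ 2 + (1 + 1) * x1 * x2" by (simp add: power2_eq_square algebra_simps)
    ultimately have "(x1 + x2) ^ 2 = x2 ^ 2 + x2 ^ 2" using ch2 by simp
    also have "x2 ^ 2 + x2 ^ 2 = (1 + 1) * x2 ^ 2" by (simp add: algebra_simps)
    finally have "x1 + x2 = 0" using ch2 by simp
    hence "x1 = - x2" by (simp add: eq_neg_iff_add_eq_0)
    thus False using that neg_self by simp
  qed
  have lin: "\<alpha> = 0 \<and> \<gamma> = 0" if "x1 \<noteq> x2" "\<alpha> * x1 + \<gamma> = 0" "\<alpha> * x2 + \<gamma> = 0" for x1 x2 \<alpha> \<gamma> :: 'a
  proof -
    have "\<alpha> * (x1 - x2) = (\<alpha> * x1 + \<gamma>) - (\<alpha> * x2 + \<gamma>)" by (simp add: algebra_simps)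
    also have "\<dots> = 0" using that by simp
    finally have "\<alpha> * (x1 - x2) = 0" .
    moreover have "x1 - x2 \<noteq> 0" using that(1) by simp
    ultimately have "\<alpha> = 0" by simp
    thus ?thesis using that by simp
  qed
  have abc: "a = 0 \<and> b = 0 \<and> c = 0"
  proof (cases "q \<in> S")
    case qin: True
    hence a0: "a = 0" by (rule qS)
    show ?thesis
    proof (cases "q + 1 \<in> S")
      case True
      hence b0: "b = 0" by (rule q1S)
      have "S \<inter> {q, q + 1} = {q, q + 1}" using qin True by auto
      hence "card Z = 1" using cS cZ S by simp
      then obtain x where "Z = {x}" by (auto simp: card_1_singleton_iff)
      hence "x \<in> Z" by simp
      show ?thesis
      proof (cases "x = 0")
        case True thus ?thesis using z0 \<open>x \<in> Z\<close> a0 b0 by simp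
      next
        case False thus ?thesis using zP[OF \<open>x \<in> Z\<close>] a0 b0 by simp
      qed
    next
      case False
      have "S \<inter> {q, q + 1} = {q}" using qin False by auto
      hence "card Z = 2" using cS cZ S by simp
      then obtain x1 x2 where x12: "Z = {x1, x2}" "x1 \<noteq> x2" by (meson card_2_iff)
      show ?thesis
      proof (cases "0 \<in> Z")
        case True
        hence c0: "c = 0" by (rule z0)
        obtain y where "y \<in> Z" "y \<noteq> 0" using x12 by blast
        hence "b = 0" using zP[of y] a0 c0 by simp
        thus ?thesis using a0 c0 by simp
      next
        case False
        hence nz: "x1 \<noteq> 0" "x2 \<noteq> 0" using x12 by auto
        have "c * x1 ^ 2 + b = 0" "c * x2 ^ 2 + b = 0" using zP[of x1] zP[of x2] nz x12 a0 by auto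
        have "c * (x1 ^ 2 - x2 ^ 2) = (c * x1 ^ 2 + b) - (c * x2 ^ 2 + b)" by (simp add: algebra_simps)
        also have "\<dots> = 0" using \<open>c * x1 ^ 2 + b = 0\<close> \<open>c * x2 ^ 2 + b = 0\<close> by simp
        finally have "c * (x1 ^ 2 - x2 ^ 2) = 0" .
        hence "c = 0" using sq_inj[OF x12(2)] by simp
        thus ?thesis using a0 \<open>c * x1 ^ 2 + b = 0\<close> by simp
      qed
    qed
  next
    case qout: False
    show ?thesis
    proof (cases "q + 1 \<in> S")
      case True
      hence b0: "b = 0" by (rule q1S)
      have "S \<inter> {q, q + 1} = {q + 1}" using qout True by auto
      hence "card Z = 2" using cS cZ S by simp
      then obtain x1 x2 where x12: "Z = {x1, x2}" "x1 \<noteq> x2" by (meson card_2_iff)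
      show ?thesis
      proof (cases "0 \<in> Z")
        case True
        hence c0: "c = 0" by (rule z0)
        obtain y where "y \<in> Z" "y \<noteq> 0" using x12 by blast
        hence "a * y = 0" using zP[of y] b0 c0 by simp
        hence "a = 0" using \<open>y \<noteq> 0\<close> by simp
        thus ?thesis using b0 c0 by simp
      next
        case False
        hence nz: "x1 \<noteq> 0" "x2 \<noteq> 0" using x12 by auto
        have fx: "x * (c * x + a) = c * x ^ 2 + a * x + b" for x
          using b0 by (simp add: power2_eq_square algebra_simps)
        have "x1 * (c * x1 + a) = 0" using zP[of x1] nz x12 fx[of x1] by simp
        hence h1: "c * x1 + a = 0" using nz by simp
        have "x2 * (c * x2 + a) = 0" using zP[of x2] nz x12 fx[of x2] by simp
        hence h2: "c * x2 + a = 0" using nz by simp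
        from h1 h2
        have "c = 0 \<and> a = 0" by (rule lin[of x1 x2 c a, OF x12(2)])
        thus ?thesis using b0 by simp
      qed
    next
      case False
      have "S \<inter> {q, q + 1} = {}" using qout False by auto
      hence "card (S \<inter> {q, q + 1}) = 0" by simp
      hence cZ3: "card Z = 3" using cS cZ S by linarith
      show ?thesis
      proof (cases "0 \<in> Z")
        case True
        hence c0: "c = 0" by (rule z0)
        have "card (Z - {0}) = card Z - 1" using True by (simp add: card_Diff_singleton)
        hence "card (Z - {0}) = 2" using cZ3 by simp
        then obtain x1 x2 where x12: "Z - {0} = {x1, x2}" "x1 \<noteq> x2" by (meson card_2_iff)
        have "x1 \<in> Z" "x1 \<noteq> 0" "x2 \<in> Z" "x2 \<noteq> 0" using x12 by blast+
        hence "c * x1 ^ 2 + a * x1 + b = 0" "c * x2 ^ 2 + a * x2 + b = 0" using zP by blast+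
        hence "a * x1 + b = 0" "a * x2 + b = 0" using c0 by simp_all
        hence "a = 0 \<and> b = 0" by (rule lin[of x1 x2 a b, OF x12(2)])
        thus ?thesis using c0 by simp
      next
        case False
        have "\<forall>x\<in>Z. c * x ^ 2 + a * x + b = 0"
        proof
          fix x assume "x \<in> Z"
          moreover hence "x \<noteq> 0" using False by blast
          ultimately show "c * x ^ 2 + a * x + b = 0" by (rule zP)
        qed
        moreover have "3 \<le> card Z" using cZ3 by simp
        ultimately show ?thesis using R1_3[where Z=Z and a=a and b=b and c=c] by blast
      qed
    qed
  qed
  show ?thesis
  proof
    fix j show "m j = 0"
    proof (cases "j < q - 1")
      case True
      hence "j = 0 \<or> (1 \<le> j \<and> j < q - 3) \<or> j = q - 3 \<or> j = q - 2" by linarith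
      thus ?thesis using mid abc by (auto simp: a_def b_def c_def)
    next
      case False thus ?thesis using mhi by simp
    qed
  qed
qed

lemma aoa1_ker:
  assumes beta: "\<forall>y::'a. y * y + y \<noteq> \<beta>"
    and m: "m \<in> fvec (q - 1)" and E: "E1 q \<beta> m = (\<lambda>_. 0)" and S: "S \<subseteq> {0..<q + 2}" "card S = 1"
    and z: "\<forall>i\<in>S. col q e m i = 0"
  shows "m = (\<lambda>_. 0)"
proof -
  have E': "E1 q \<beta> m j = 0" for j using E by simp
  have mid: "\<forall>j. 1 \<le> j \<and> j < q - 3 \<longrightarrow> m j = 0"
  proof (intro allI impI)
    fix j assume j: "1 \<le> j \<and> j < q - 3"
    have "E1 q \<beta> m (j - 1) = 0" by (rule E')
    moreover have "j - 1 < q - 4" "j - 1 + 1 = j" using j by auto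
    ultimately show "m j = 0" by (simp add: E1_def)
  qed
  have "E1 q \<beta> m (q - 4) = 0" by (rule E')
  hence e1: "m (q - 3) = m (q - 2)" by (simp add: E1_def)
  have "E1 q \<beta> m (q - 3) = 0" by (rule E')
  moreover have "q - 3 \<noteq> q - 4" "\<not> q - 3 < q - 4" using q4 by auto
  ultimately have e2: "m 0 = \<beta> * m (q - 2)" by (simp add: E1_def)
  have mhi: "\<forall>j\<ge>q - 1. m j = 0" using m by (simp add: fvec_def)
  define l where "l = m (q - 2)"
  have b0: "\<beta> \<noteq> 0" using beta[rule_format, of 0] by auto
  from S(2) obtain i where Si: "S = {i}" by (auto simp: card_1_singleton_iff)
  have ci: "col q e m i = 0" using z Si by simp
  have l0: "l = 0"
  proof (cases "i < q")
    case False
    hence "l = 0 \<or> m (q - 3) = 0" using ci by (auto simp: col_def l_def split: if_splits)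
    thus ?thesis using e1 by (auto simp: l_def)
  next
    case True
    define x where "x = e i"
    have evx: "ev q m x = 0" using ci True by (simp add: col_def x_def)
    show ?thesis
    proof (cases "x = 0")
      case True
      hence "m 0 = 0" using evx ev3_0[OF mid] by simp
      thus ?thesis using e2 b0 by (simp add: l_def)
    next
      case False
      have "x ^ 2 * ev q m x = l * (\<beta> * x ^ 2 + x + 1)"
        using ev3_nz[OF mid False] e1 e2 by (simp add: l_def algebra_simps)
      hence "l * (\<beta> * x ^ 2 + x + 1) = 0" using evx by simp
      moreover have "\<beta> * x ^ 2 + x + 1 \<noteq> 0"
      proof
        assume H: "\<beta> * x ^ 2 + x + 1 = 0"
        define y where "y = inverse x"
        have "\<beta> + (y * y + y) = y ^ 2 * (\<beta> * x ^ 2 + x + 1)"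
          using False by (simp add: y_def power2_eq_square field_simps)
        also have "\<dots> = 0" using H by simp
        finally have "\<beta> + (y * y + y) = 0" .
        hence "\<beta> = - (y * y + y)" by (simp only: eq_neg_iff_add_eq_0)
        also have "- (y * y + y) = y * y + y" by (rule neg_self)
        finally show False using beta by blast
      qed
      ultimately show ?thesis by simp
    qed
  qed
  show ?thesis
  proof
    fix j show "m j = 0"
    proof (cases "j < q - 1")
      case True
      hence "j = 0 \<or> (1 \<le> j \<and> j < q - 3) \<or> j = q - 3 \<or> j = q - 2" by linarith
      thus ?thesis using mid l0 e1 e2 by (auto simp: l_def)
    next
      case False thus ?thesis using mhi by simp
    qed
  qed
qed

end

end


lemma E3_add: "E3 q (\<lambda>j. m1 j + m2 j) i = E3 q m1 i + E3 q m2 i" by (simp add: E3_def)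
lemma E3_smul: "E3 q (\<lambda>j. c * m j) i = c * E3 q m i" by (simp add: E3_def)
lemma E1_add: "E1 q \<beta> (\<lambda>j. m1 j + m2 j) i = E1 q \<beta> m1 i + E1 q \<beta> m2 i" by (simp add: E1_def algebra_simps)
lemma E1_smul: "E1 q \<beta> (\<lambda>j. c * m j) i = c * E1 q \<beta> m i" by (simp add: E1_def algebra_simps)
lemma E3_in: "E3 q m \<in> fvec (q - 1 - 3)" by (simp add: E3_def fvec_def)
lemma E1_in:
  assumes "4 \<le> q" shows "E1 q \<beta> m \<in> fvec (q - 1 - 1)"
  unfolding fvec_def
proof (intro CollectI allI impI)
  fix j assume j: "q - 1 - 1 \<le> j"
  have "\<not> j < q - 4" "j \<noteq> q - 4" "j \<noteq> q - 3" using j assms by linarith+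
  thus "E1 q \<beta> m j = 0" by (simp add: E1_def)
qed

theorem theorem3p10:
  fixes q m :: nat
  assumes "card (UNIV :: 'a::{finite,field} set) = q"
    and "q = 2 ^ m"
    and "q \<ge> 4"
  shows "(\<exists>A :: ((nat \<Rightarrow> 'a) \<times> (nat \<Rightarrow> 'a)) list. linear_AOA 1 (q - 1) (q + 2) A) \<and>
         (\<exists>A :: ((nat \<Rightarrow> 'a) \<times> (nat \<Rightarrow> 'a)) list. linear_AOA 3 (q - 1) (q + 2) A)"
proof -
  have m1: "m \<ge> 1" using assms(2,3) by (cases m) auto
  have ch2: "(1::'a) + 1 = 0" using char2_of_card[OF _ m1] assms(1,2) by simp
  obtain e :: "nat \<Rightarrow> 'a" where e: "bij_betw e {0..<q} UNIV"
    using ex_bij_betw_nat_finite[of "UNIV :: 'a set"] assms(1) by auto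
  have q4: "4 \<le> q" using assms(3) .
  obtain \<beta> :: 'a where beta: "\<forall>y::'a. y * y + y \<noteq> \<beta>"
  proof -
    have "\<not> inj (\<lambda>y::'a. y * y + y)"
    proof
      assume "inj (\<lambda>y::'a. y * y + y)"
      moreover have "(\<lambda>y::'a. y * y + y) 0 = (\<lambda>y::'a. y * y + y) 1" using ch2 by simp
      ultimately have "(0::'a) = 1" by (rule injD)
      thus False by simp
    qed
    hence "\<not> surj (\<lambda>y::'a. y * y + y)" using finite_UNIV_surj_inj[OF finite_UNIV] by blast
    then obtain b where "b \<notin> range (\<lambda>y::'a. y * y + y)" by blast
    hence "\<forall>y::'a. y * y + y \<noteq> b" by auto
    thus ?thesis using that by blast
  qed
  have A1: "\<exists>A :: ((nat \<Rightarrow> 'a) \<times> (nat \<Rightarrow> 'a)) list. linear_AOA 1 (q - 1) (q + 2) A"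
  proof (rule construct[where col = "col q e" and E = "E1 q \<beta>"])
    show "1 \<le> (1::nat)" "1 \<le> q - 1" "q - 1 \<le> q + 2" using q4 by auto
    show "\<And>m1 m2 i. col q e (\<lambda>j. m1 j + m2 j) i = col q e m1 i + col q e m2 i" by (rule col_add)
    show "\<And>c m i. col q e (\<lambda>j. c * m j) i = c * col q e m i" by (rule col_smul)
    show "\<And>m1 m2 i. E1 q \<beta> (\<lambda>j. m1 j + m2 j) i = E1 q \<beta> m1 i + E1 q \<beta> m2 i" by (rule E1_add)
    show "\<And>c m i. E1 q \<beta> (\<lambda>j. c * m j) i = c * E1 q \<beta> m i" by (rule E1_smul)
    show "\<And>m. m \<in> fvec (q - 1) \<Longrightarrow> E1 q \<beta> m \<in> fvec (q - 1 - 1)" using E1_in[OF q4] by blast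
    show "\<And>m S. m \<in> fvec (q - 1) \<Longrightarrow> S \<subseteq> {0..<q + 2} \<Longrightarrow> card S = q - 1 \<Longrightarrow> (\<forall>i\<in>S. col q e m i = 0) \<Longrightarrow> m = (\<lambda>_. 0)"
      by (rule oa_ker[OF assms(1) q4 ch2 e])
    show "\<And>m S. m \<in> fvec (q - 1) \<Longrightarrow> S \<subseteq> {0..<q + 2} \<Longrightarrow> card S = 1 \<Longrightarrow> (\<forall>i\<in>S. col q e m i = 0) \<Longrightarrow> E1 q \<beta> m = (\<lambda>_. 0) \<Longrightarrow> m = (\<lambda>_. 0)"
      by (rule aoa1_ker[OF assms(1) q4 ch2 e beta])
  qed
  have A3: "\<exists>A :: ((nat \<Rightarrow> 'a) \<times> (nat \<Rightarrow> 'a)) list. linear_AOA 3 (q - 1) (q + 2) A"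
  proof (rule construct[where col = "col q e" and E = "E3 q"])
    show "1 \<le> (3::nat)" "3 \<le> q - 1" "q - 1 \<le> q + 2" using q4 by auto
    show "\<And>m1 m2 i. col q e (\<lambda>j. m1 j + m2 j) i = col q e m1 i + col q e m2 i" by (rule col_add)
    show "\<And>c m i. col q e (\<lambda>j. c * m j) i = c * col q e m i" by (rule col_smul)
    show "\<And>m1 m2 i. E3 q (\<lambda>j. m1 j + m2 j) i = E3 q m1 i + E3 q m2 i" by (rule E3_add)
    show "\<And>c m i. E3 q (\<lambda>j. c * m j) i = c * E3 q m i" by (rule E3_smul)
    show "\<And>m. m \<in> fvec (q - 1) \<Longrightarrow> E3 q m \<in> fvec (q - 1 - 3)" using E3_in by blast
    show "\<And>m S. m \<in> fvec (q - 1) \<Longrightarrow> S \<subseteq> {0..<q + 2} \<Longrightarrow> card S = q - 1 \<Longrightarrow> (\<forall>i\<in>S. col q e m i = 0) \<Longrightarrow> m = (\<lambda>_. 0)"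
      by (rule oa_ker[OF assms(1) q4 ch2 e])
    show "\<And>m S. m \<in> fvec (q - 1) \<Longrightarrow> S \<subseteq> {0..<q + 2} \<Longrightarrow> card S = 3 \<Longrightarrow> (\<forall>i\<in>S. col q e m i = 0) \<Longrightarrow> E3 q m = (\<lambda>_. 0) \<Longrightarrow> m = (\<lambda>_. 0)"
    proof -
      fix mm :: "nat \<Rightarrow> 'a" and S
      assume "mm \<in> fvec (q - 1)" "S \<subseteq> {0..<q + 2}" "card S = 3" "\<forall>i\<in>S. col q e mm i = 0" "E3 q mm = (\<lambda>_. 0)"
      thus "mm = (\<lambda>_. 0)" using aoa3_ker[OF assms(1) q4 ch2 e] by blast
    qed
  qed
  show ?thesis using A1 A3 by blast
qed

end
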